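(* Let $k\ge 3$, let $\mathbf{v}^i,\mathbf{w}^i\in\mathbb{C}^{n_i}$ ($i=1,\dots,k$) with $\mathbf{v}^i,\mathbf{w}^i$ linearly independent for every $i$, $V_i=\langle\mathbf{v}^i,\mathbf{w}^i\rangle$, and $T=\sum_{i=1}^k \mathbf{v}^1\otimes\cdots\otimes\mathbf{w}^i\otimes\cdots\otimes\mathbf{v}^k$ (with $\mathbf{w}^i$ in the $i$-th slot). Let $P=\mathbf{p}^1\otimes\cdots\otimes\mathbf{p}^k$ with $\mathbf{p}^i\in V_i$ nonzero and $\mathbf{p}^i$ not a scalar multiple of $\mathbf{v}^i$ for every $i=1,\dots,k$. Then there is $\lambda\in\mathbb{C}$ with $\mathrm{rk}(T-\lambda P)=\mathrm{rk}(T)-1$, i.e. $P$ belongs to the decomposition locus of $T$.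
   Context: The rank of a tensor is the minimal number of rank-one tensors $\mathbf{u}^1\otimes\cdots\otimes\mathbf{u}^k$ summing to it. A rank-one tensor $P$ is in the decomposition locus of $T$ if $\mathrm{rk}(T-\lambda P)=\mathrm{rk}(T)-1$ for some $\lambda\in\mathbb{C}$. *)

theory Defs
  imports Complex_Main
begin

text \<open>Tensors in C^{n_0} x ... x C^{n_{k-1}} (factors indexed 0..k-1) are represented
  as functions from multi-indices (nat => nat) to complex; only valid multi-indices matter.
  A family of vectors is u :: nat => nat => complex, u i j = j-th coordinate of the i-th vector.\<close>

definition valid_idx :: "nat \<Rightarrow> (nat \<Rightarrow> nat) \<Rightarrow> (nat \<Rightarrow> nat) \<Rightarrow> bool" where
  "valid_idx k n idx \<longleftrightarrow> (\<forall>i<k. idx i < n i)"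

definition rank_one :: "nat \<Rightarrow> (nat \<Rightarrow> nat \<Rightarrow> complex) \<Rightarrow> (nat \<Rightarrow> nat) \<Rightarrow> complex" where
  "rank_one k u = (\<lambda>idx. \<Prod>i<k. u i (idx i))"

definition trank :: "nat \<Rightarrow> (nat \<Rightarrow> nat) \<Rightarrow> ((nat \<Rightarrow> nat) \<Rightarrow> complex) \<Rightarrow> nat" where
  "trank k n T = (LEAST r. \<exists>us :: nat \<Rightarrow> nat \<Rightarrow> nat \<Rightarrow> complex.
      \<forall>idx. valid_idx k n idx \<longrightarrow> T idx = (\<Sum>j<r. rank_one k (us j) idx))"

definition lin_indep2 :: "nat \<Rightarrow> (nat \<Rightarrow> complex) \<Rightarrow> (nat \<Rightarrow> complex) \<Rightarrow> bool" where
  "lin_indep2 m x y \<longleftrightarrow> (\<forall>a b. (\<forall>j<m. a * x j + b * y j = 0) \<longrightarrow> a = 0 \<and> b = 0)"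

definition in_span2 :: "nat \<Rightarrow> (nat \<Rightarrow> complex) \<Rightarrow> (nat \<Rightarrow> complex) \<Rightarrow> (nat \<Rightarrow> complex) \<Rightarrow> bool" where
  "in_span2 m x y z \<longleftrightarrow> (\<exists>a b. \<forall>j<m. z j = a * x j + b * y j)"

definition in_decomposition_locus ::
  "nat \<Rightarrow> (nat \<Rightarrow> nat) \<Rightarrow> ((nat \<Rightarrow> nat) \<Rightarrow> complex) \<Rightarrow> ((nat \<Rightarrow> nat) \<Rightarrow> complex) \<Rightarrow> bool" where
  "in_decomposition_locus k n T P \<longleftrightarrow>
     (\<exists>c::complex. trank k n (\<lambda>idx. T idx - c * P idx) = trank k n T - 1)"

end

theory Submission imports Defs "HOL-Computational_Algebra.Polynomial" "HOL-Library.FuncSet"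
begin


definition Wf :: "nat \<Rightarrow> (nat\<Rightarrow>complex) \<Rightarrow> (nat\<Rightarrow>complex) \<Rightarrow> complex" where
 "Wf k a b = (\<Sum>i<k. b i * (\<Prod>l<k. if l = i then 1 else a l))"

lemma Wf_Suc: "Wf (Suc k) a b = b k * (\<Prod>l<k. a l) + a k * Wf k a b"
proof -
  have 1: "(\<Prod>l<k. if l = k then 1 else a l) = (\<Prod>l<k. a l)"
    by (rule prod.cong) auto
  have 2: "(\<Sum>i<k. b i * (\<Prod>l<Suc k. if l = i then 1 else a l))
        = a k * (\<Sum>i<k. b i * (\<Prod>l<k. if l = i then 1 else a l))"
    by (simp add: sum_distrib_left mult_ac)
  show ?thesis unfolding Wf_def by (simp add: 1 2 del: prod.lessThan_Suc, simp add: 1)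
qed

lemma Wf_shift: "Wf k a (\<lambda>i. b i + d i * a i) = Wf k a b + (\<Sum>i<k. d i) * (\<Prod>l<k. a l)"
proof (induction k)
  case 0 then show ?case by (simp add: Wf_def)
next
  case (Suc k) then show ?case by (simp add: Wf_Suc algebra_simps)
qed

definition Fp :: "nat \<Rightarrow> (nat\<Rightarrow>complex) \<Rightarrow> (nat\<Rightarrow>complex) \<Rightarrow> complex poly" where
 "Fp k a b = (\<Prod>i<k. [:a i, b i:])"

lemma Fp_Suc: "Fp (Suc k) a b = smult (a k) (Fp k a b) + pCons 0 (smult (b k) (Fp k a b))"
  by (simp add: Fp_def)

lemma Fp_degree: "degree (Fp k a b) \<le> k"
proof (induction k)
  case 0 then show ?case by (simp add: Fp_def)
next
  case (Suc k)
  have e: "Fp (Suc k) a b = Fp k a b * [:a k, b k:]" by (simp add: Fp_def)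
  have "degree (Fp (Suc k) a b) \<le> degree (Fp k a b) + degree [:a k, b k:]"
    unfolding e by (rule degree_mult_le)
  also have "\<dots> \<le> Suc k" using Suc by simp
  finally show ?case .
qed

lemma Fp_coeff0: "coeff (Fp k a b) 0 = (\<Prod>l<k. a l)"
  by (induction k) (simp_all add: Fp_Suc Fp_def[of 0])

lemma Fp_coeff1: "coeff (Fp k a b) 1 = Wf k a b"
  by (induction k) (simp_all add: Fp_Suc Fp_def[of 0] Wf_Suc Fp_coeff0 Wf_def[of 0] algebra_simps)

lemma Fp_coefftop: "coeff (Fp k a b) k = (\<Prod>l<k. b l)"
proof (induction k)
  case 0 then show ?case by (simp add: Fp_def)
next
  case (Suc k)
  have "coeff (Fp k a b) (Suc k) = 0" using Fp_degree[of k a b] by (simp add: coeff_eq_0)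
  then show ?case using Suc by (simp add: Fp_Suc)
qed

lemma Fp_poly: "poly (Fp k a b) x = (\<Prod>i<k. a i + x * b i)"
  by (simp add: Fp_def poly_prod)

definition om :: "nat \<Rightarrow> complex" where "om N = cis (2 * pi / real N)"

lemma om_pow: "om N ^ m = cis (2 * pi * real m / real N)"
  by (simp add: om_def DeMoivre mult_ac)

lemma om_N: "N > 0 \<Longrightarrow> om N ^ N = 1"
  by (simp add: om_pow complex_eq_iff)

lemma om_pow_eq1: assumes "N > 0" shows "om N ^ m = 1 \<longleftrightarrow> N dvd m"
proof
  assume "N dvd m" then obtain q where "m = N * q" by blast
  then show "om N ^ m = 1" using om_N[OF assms] by (simp add: power_mult)
next
  assume h: "om N ^ m = 1"
  have "om N ^ m = om N ^ (m mod N) * (om N ^ N) ^ (m div N)"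
    by (metis mod_div_mult_eq power_add power_mult mult.commute)
  then have "om N ^ (m mod N) = 1" using h om_N[OF assms] by simp
  then have "cis (2 * pi * real (m mod N) / real N) = cis (2 * pi * real 0 / real N)"
    by (simp add: om_pow)
  moreover have "m mod N \<in> {..<N}" "0 \<in> {..<N}" using assms by auto
  ultimately have "m mod N = 0"
    using bij_betw_roots_unity[OF assms] unfolding bij_betw_def inj_on_def by blast
  then show "N dvd m" by auto
qed

lemma om_sum: assumes "N > 0"
  shows "(\<Sum>j<N. om N ^ (j * a)) = (if N dvd a then of_nat N else 0)"
proof (cases "N dvd a")
  case True
  then have "om N ^ (j * a) = 1" for j using om_pow_eq1[OF assms, of "j*a"] by auto
  then show ?thesis using True by simp
next
  case False
  have ne: "om N ^ a \<noteq> 1" using om_pow_eq1[OF assms] False by simp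
  have "(\<Sum>j<N. om N ^ (j * a)) = (\<Sum>j<N. (om N ^ a) ^ j)"
    by (intro sum.cong refl) (metis power_mult mult.commute)
  also have "\<dots> = ((om N ^ a) ^ N - 1) / (om N ^ a - 1)" using ne by (rule geometric_sum)
  also have "(om N ^ a) ^ N = 1"
    by (metis om_N[OF assms] power_mult mult.commute power_one)
  finally show ?thesis using False by simp
qed

lemma om_filter:
  assumes "N > 0" "degree p \<le> K"
  shows "(\<Sum>j<N. om N ^ (j*(N-1)) * poly p (t * om N ^ j))
       = of_nat N * (\<Sum>m\<le>K. if N dvd (m + (N-1)) then coeff p m * t ^ m else 0)"
proof -
  have pe: "poly p x = (\<Sum>m\<le>K. coeff p m * x ^ m)" for x
    using arg_cong[OF poly_as_sum_of_monoms'[OF assms(2)], of "\<lambda>q. poly q x"]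
    by (simp add: poly_sum poly_monom)
  have "(\<Sum>j<N. om N ^ (j*(N-1)) * poly p (t * om N ^ j))
     = (\<Sum>j<N. \<Sum>m\<le>K. coeff p m * t ^ m * om N ^ (j * (m + (N-1))))"
  proof (intro sum.cong refl)
    fix j
    have e: "om N ^ (j*(N-1)) * (coeff p m * (t * om N ^ j)^m) = coeff p m * t ^ m * om N ^ (j * (m + (N-1)))" for m
    proof -
      have "om N ^ (j * (m + (N-1))) = (om N ^ j) ^ m * om N ^ (j*(N-1))"
        by (simp only: distrib_left power_add power_mult)
      then show ?thesis by (simp add: power_mult_distrib)
    qed
    show "om N ^ (j*(N-1)) * poly p (t * om N ^ j) = (\<Sum>m\<le>K. coeff p m * t ^ m * om N ^ (j * (m + (N-1))))"
      by (simp only: pe sum_distrib_left e)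
  qed
  also have "\<dots> = (\<Sum>m\<le>K. coeff p m * t ^ m * (\<Sum>j<N. om N ^ (j * (m + (N-1)))))"
    by (subst sum.swap) (simp add: sum_distrib_left)
  also have "\<dots> = of_nat N * (\<Sum>m\<le>K. if N dvd (m + (N-1)) then coeff p m * t ^ m else 0)"
    apply (simp add: om_sum[OF assms(1)] sum_distrib_left if_distrib mult_ac cong: if_cong)
    apply (rule sum.cong)
    using assms(1) by auto
  finally show ?thesis .
qed



lemma dvd_filter1: fixes k m :: nat assumes "k \<ge> 2" "m \<le> k" shows "k dvd (m + (k-1)) \<longleftrightarrow> m = 1"
proof
  assume "k dvd (m + (k-1))"
  then obtain q where q: "m + (k-1) = k * q" by blast
  have "q \<ge> 1" using q assms by (cases q) auto
  moreover have "q < 2"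
  proof (rule ccontr)
    assume "\<not> q < 2" then have "k * 2 \<le> k * q" by simp
    then show False using q assms by linarith
  qed
  ultimately have "q = 1" by auto
  then show "m = 1" using q assms by auto
qed (use assms in auto)

lemma dvd_filter2: fixes N m :: nat assumes "N \<ge> 2" "m \<le> N + 1" shows "N dvd (m + (N-1)) \<longleftrightarrow> m = 1 \<or> m = N + 1"
proof
  assume "N dvd (m + (N-1))"
  then obtain q where q: "m + (N-1) = N * q" by blast
  have "q \<ge> 1" using q assms by (cases q) auto
  moreover have "q < 3"
  proof (rule ccontr)
    assume "\<not> q < 3" then have "N * 3 \<le> N * q" by simp
    then show False using q assms by linarith
  qed
  ultimately have "q = 1 \<or> q = 2" by auto
  then show "m = 1 \<or> m = N + 1" using q assms by auto
next
  assume "m = 1 \<or> m = N + 1"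
  then show "N dvd (m + (N-1))" using assms
    by (auto intro: dvd_add)
qed



lemma sum_filter1:
  fixes g :: "nat \<Rightarrow> complex" assumes "k \<ge> 2"
  shows "(\<Sum>m\<le>k. if k dvd (m + (k-1)) then g m else 0) = g 1"
proof -
  have "(\<Sum>m\<le>k. if k dvd (m + (k-1)) then g m else 0) = (\<Sum>m\<le>k. if m = 1 then g m else 0)"
    by (rule sum.cong) (use dvd_filter1[OF assms] in auto)
  also have "\<dots> = g 1" using assms by (simp add: sum.delta)
  finally show ?thesis .
qed

lemma sum_filter2:
  fixes g :: "nat \<Rightarrow> complex" assumes "N \<ge> 2"
  shows "(\<Sum>m\<le>N+1. if N dvd (m + (N-1)) then g m else 0) = g 1 + g (N+1)"
proof -
  have "(\<Sum>m\<le>N+1. if N dvd (m + (N-1)) then g m else 0) = (\<Sum>m\<le>N+1. if m = 1 then g m else if m = N+1 then g m else 0)"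
    by (rule sum.cong) (use dvd_filter2[OF assms] in auto)
  also have "\<dots> = (\<Sum>m\<le>N+1. (if m = 1 then g m else 0) + (if m = N+1 then g m else 0))"
    by (rule sum.cong) (use assms in auto)
  also have "\<dots> = g 1 + g (N+1)" using assms by (simp add: sum.distrib sum.delta)
  finally show ?thesis .
qed

lemma upper:
  fixes k :: nat and e :: "nat \<Rightarrow> complex"
  assumes k3: "k \<ge> 3"
  shows "\<exists>c (\<gamma>::nat\<Rightarrow>complex) (\<alpha>::nat\<Rightarrow>nat\<Rightarrow>complex) \<beta>. \<forall>V W.
     Wf k V W - c * (\<Prod>i<k. W i + e i * V i) = (\<Sum>j<k-1. \<gamma> j * (\<Prod>i<k. \<alpha> j i * V i + \<beta> j i * W i))"
proof -
  define s where "s = (\<Sum>i<k. e i)"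
  have shift: "Wf k V (\<lambda>i. W i + e i * V i) = Wf k V W + s * (\<Prod>l<k. V l)" for V W
    unfolding s_def by (rule Wf_shift)
  show ?thesis
  proof (cases "s = 0")
    case True
    define N where "N = k - 1"
    have N2: "N \<ge> 2" and kN: "k = N + 1" using k3 by (auto simp: N_def)
    define \<omega> where "\<omega> = om N"
    define \<gamma> where "\<gamma> j = \<omega> ^ (j*(N-1)) / of_nat N" for j
    have key: "Wf k V W - (-1) * (\<Prod>i<k. W i + e i * V i)
       = (\<Sum>j<k-1. \<gamma> j * (\<Prod>i<k. (1 + \<omega>^j * e i) * V i + \<omega>^j * W i))" for V W
    proof -
      define Y where "Y i = W i + e i * V i" for i
      have "(\<Sum>j<N. \<omega> ^ (j*(N-1)) * poly (Fp k V Y) (1 * \<omega> ^ j))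
          = of_nat N * (\<Sum>m\<le>N+1. if N dvd (m + (N-1)) then coeff (Fp k V Y) m * 1 ^ m else 0)"
        unfolding \<omega>_def using N2 Fp_degree[of k V Y] kN by (intro om_filter) auto
      also have "\<dots> = of_nat N * (Wf k V Y + (\<Prod>i<k. Y i))"
      proof -
        have "(\<Sum>m\<le>N+1. if N dvd (m + (N-1)) then coeff (Fp k V Y) m * 1 ^ m else 0)
            = coeff (Fp k V Y) 1 * 1 ^ 1 + coeff (Fp k V Y) (N+1) * 1 ^ (N+1)"
          by (rule sum_filter2[OF N2])
        also have "\<dots> = Wf k V Y + (\<Prod>i<k. Y i)"
          using Fp_coeff1[of k V Y] Fp_coefftop[of k V Y] kN by simp
        finally show ?thesis by simp
      qed
      finally have A: "(\<Sum>j<N. \<omega> ^ (j*(N-1)) * (\<Prod>i<k. V i + \<omega> ^ j * Y i))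
          = of_nat N * (Wf k V Y + (\<Prod>i<k. Y i))" by (simp add: Fp_poly)
      have B: "Wf k V Y = Wf k V W" using shift True unfolding Y_def by simp
      have C: "(\<Prod>i<k. V i + \<omega> ^ j * Y i) = (\<Prod>i<k. (1 + \<omega>^j * e i) * V i + \<omega>^j * W i)" for j
        unfolding Y_def by (rule prod.cong) (auto simp: algebra_simps)
      have "Wf k V W + (\<Prod>i<k. Y i) = (\<Sum>j<N. \<gamma> j * (\<Prod>i<k. V i + \<omega> ^ j * Y i))"
        using A N2 unfolding \<gamma>_def B by (simp add: sum_divide_distrib[symmetric] field_simps)
      also have "\<dots> = (\<Sum>j<N. \<gamma> j * (\<Prod>i<k. (1 + \<omega>^j * e i) * V i + \<omega>^j * W i))"
        using C by simp
      finally show ?thesis unfolding N_def Y_def by simp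
    qed
    show ?thesis by (rule exI[of _ "-1"], rule exI[of _ \<gamma>], intro exI allI, rule key)
  next
    case False
    define t where "t = of_nat k / s"
    have k0: "(of_nat k :: complex) \<noteq> 0" using k3 by simp
    have t0: "t \<noteq> 0" using False k0 by (simp add: t_def)
    have ts: "t * s / of_nat k = 1" using False k0 by (simp add: t_def)
    define \<omega> where "\<omega> = om k"
    define d where "d i = e i - s / of_nat k" for i
    define \<gamma> where "\<gamma> j = \<omega> ^ (Suc j*(k-1)) / (of_nat k * t)" for j
    have key: "Wf k V W - (t^(k-1) / of_nat k) * (\<Prod>i<k. W i + e i * V i)
       = (\<Sum>j<k-1. \<gamma> j * (\<Prod>i<k. (1 + t * \<omega>^Suc j * d i) * V i + t * \<omega>^Suc j * W i))" for V W
    proof -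
      define Z where "Z i = W i + d i * V i" for i
      have sd: "(\<Sum>i<k. d i) = 0" using k0 by (simp add: d_def sum_subtractf s_def)
      have B: "Wf k V Z = Wf k V W" using Wf_shift[of k V W d] sd unfolding Z_def by simp
      have "(\<Sum>j<k. \<omega> ^ (j*(k-1)) * poly (Fp k V Z) (t * \<omega> ^ j))
          = of_nat k * (\<Sum>m\<le>k. if k dvd (m + (k-1)) then coeff (Fp k V Z) m * t ^ m else 0)"
        unfolding \<omega>_def using k3 Fp_degree[of k V Z] by (intro om_filter) auto
      also have "\<dots> = of_nat k * (Wf k V W * t)"
        using sum_filter1[of k "\<lambda>m. coeff (Fp k V Z) m * t ^ m"] k3 Fp_coeff1[of k V Z] B
        by simp
      finally have A: "(\<Sum>j<k. \<omega> ^ (j*(k-1)) * (\<Prod>i<k. V i + t * \<omega> ^ j * Z i))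
          = of_nat k * (Wf k V W * t)" by (simp add: Fp_poly mult.assoc)
      have kS: "k = Suc (k-1)" using k3 by simp
      have j0: "(\<Prod>i<k. V i + t * \<omega> ^ 0 * Z i) = t ^ k * (\<Prod>i<k. W i + e i * V i)"
      proof -
        have "(\<Prod>i<k. V i + t * \<omega> ^ 0 * Z i) = (\<Prod>i<k. t * (W i + e i * V i))"
        proof (rule prod.cong)
          fix i
          have "V i + t * \<omega> ^ 0 * Z i = t * (W i + e i * V i) + (1 - t * s / of_nat k) * V i"
            unfolding Z_def d_def by (simp add: algebra_simps)
          then show "V i + t * \<omega> ^ 0 * Z i = t * (W i + e i * V i)" using ts by simp
        qed simp
        then show ?thesis by (simp add: prod.distrib)
      qed
      have C: "(\<Prod>i<k. V i + t * \<omega> ^ Suc j * Z i) = (\<Prod>i<k. (1 + t * \<omega>^Suc j * d i) * V i + t * \<omega>^Suc j * W i)" for j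
        unfolding Z_def by (rule prod.cong) (auto simp: algebra_simps)
      have "(\<Sum>j<k. \<omega> ^ (j*(k-1)) * (\<Prod>i<k. V i + t * \<omega> ^ j * Z i))
         = t ^ k * (\<Prod>i<k. W i + e i * V i) + (\<Sum>j<k-1. \<omega> ^ (Suc j*(k-1)) * (\<Prod>i<k. V i + t * \<omega> ^ Suc j * Z i))"
        by (subst kS, subst sum.lessThan_Suc_shift) (simp add: j0[simplified])
      then have D: "of_nat k * t * Wf k V W = t ^ k * (\<Prod>i<k. W i + e i * V i) + (\<Sum>j<k-1. \<omega> ^ (Suc j*(k-1)) * (\<Prod>i<k. V i + t * \<omega> ^ Suc j * Z i))"
        using A by (simp add: mult_ac)
      have tk: "t ^ k = t * t^(k-1)" by (subst kS) simp
      have "Wf k V W - (t^(k-1) / of_nat k) * (\<Prod>i<k. W i + e i * V i)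
           = (\<Sum>j<k-1. \<gamma> j * (\<Prod>i<k. V i + t * \<omega> ^ Suc j * Z i))"
      proof -
        have "of_nat k * t * (Wf k V W - (t^(k-1) / of_nat k) * (\<Prod>i<k. W i + e i * V i))
             = of_nat k * t * (\<Sum>j<k-1. \<gamma> j * (\<Prod>i<k. V i + t * \<omega> ^ Suc j * Z i))"
        proof -
          have G: "of_nat k * t * (\<Sum>j<k-1. \<gamma> j * (\<Prod>i<k. V i + t * \<omega> ^ Suc j * Z i))
             = (\<Sum>j<k-1. \<omega> ^ (Suc j*(k-1)) * (\<Prod>i<k. V i + t * \<omega> ^ Suc j * Z i))"
            unfolding sum_distrib_left by (rule sum.cong) (use k0 t0 in \<open>simp_all add: \<gamma>_def\<close>)
          have H: "of_nat k * t * (Wf k V W - (t^(k-1) / of_nat k) * (\<Prod>i<k. W i + e i * V i))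
             = of_nat k * t * Wf k V W - t ^ k * (\<Prod>i<k. W i + e i * V i)"
            using k0 unfolding tk by (simp add: field_simps)
          show ?thesis unfolding G H D by simp
        qed
        then show ?thesis using k0 t0 by simp
      qed
      then show ?thesis unfolding C .
    qed
    show ?thesis by (rule exI[of _ "t^(k-1) / of_nat k"], rule exI[of _ \<gamma>], intro exI allI, rule key)
  qed
qed



lemma Wf_cong: "(\<And>i. i < k \<Longrightarrow> a i = a' i) \<Longrightarrow> (\<And>i. i < k \<Longrightarrow> b i = b' i) \<Longrightarrow> Wf k a b = Wf k a' b'"
  unfolding Wf_def by (auto intro!: sum.cong prod.cong)

lemma lower:
  fixes \<alpha> \<beta> :: "nat \<Rightarrow> nat \<Rightarrow> complex"
  assumes "finite J"
    and "\<forall>a b. Wf k a b + c * (\<Prod>l<k. a l) = (\<Sum>j\<in>J. \<gamma> j * (\<Prod>i<k. \<alpha> j i * a i + \<beta> j i * b i))"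
  shows "k \<le> card J"
  using assms
proof (induction k arbitrary: c J \<gamma>)
  case 0 then show ?case by simp
next
  case (Suc k)
  let ?P = "\<lambda>j a b. (\<Prod>i<k. \<alpha> j i * a i + \<beta> j i * b i)"
  have H: "b k * (\<Prod>l<k. a l) + a k * Wf k a b + c * (\<Prod>l<k. a l) * a k
        = (\<Sum>j\<in>J. \<gamma> j * ?P j a b * (\<alpha> j k * a k + \<beta> j k * b k))" for a b
    using Suc.prems(2)[rule_format, of a b] by (simp add: Wf_Suc mult.assoc)
  have "\<exists>j0\<in>J. \<gamma> j0 * \<beta> j0 k \<noteq> 0"
  proof (rule ccontr)
    assume "\<not> ?thesis"
    then have z: "\<forall>j\<in>J. \<gamma> j * \<beta> j k = 0" by auto
    define a0 where "a0 = (\<lambda>l. if l = k then 0 else (1::complex))"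
    define b0 where "b0 = (\<lambda>l. if l = k then 1 else (0::complex))"
    have "(\<Prod>l<k. a0 l) = 1" by (rule prod.neutral) (auto simp: a0_def)
    then have "b0 k * (\<Prod>l<k. a0 l) + a0 k * Wf k a0 b0 + c * (\<Prod>l<k. a0 l) * a0 k = 1"
      by (simp add: a0_def b0_def)
    moreover have "(\<Sum>j\<in>J. \<gamma> j * ?P j a0 b0 * (\<alpha> j k * a0 k + \<beta> j k * b0 k)) = 0"
    proof (rule sum.neutral, rule ballI)
      fix j assume "j \<in> J"
      then have "\<gamma> j * \<beta> j k = 0" using z by auto
      then show "\<gamma> j * ?P j a0 b0 * (\<alpha> j k * a0 k + \<beta> j k * b0 k) = 0"
        by (auto simp add: a0_def b0_def)
    qed
    ultimately show False using H[where a=a0 and b=b0] by simp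
  qed
  then obtain j0 where j0: "j0 \<in> J" "\<gamma> j0 * \<beta> j0 k \<noteq> 0" by blast
  define a0 where "a0 = \<alpha> j0 k"
  define b0 where "b0 = \<beta> j0 k"
  have b0nz: "b0 \<noteq> 0" using j0 by (simp add: b0_def)
  define \<gamma>' where "\<gamma>' j = \<gamma> j * (\<alpha> j k * b0 - \<beta> j k * a0) / b0" for j
  have "\<forall>a b. Wf k a b + (c - a0 / b0) * (\<Prod>l<k. a l) = (\<Sum>j\<in>J - {j0}. \<gamma>' j * ?P j a b)"
  proof (intro allI)
    fix a b :: "nat \<Rightarrow> complex"
    define a' where "a' = a(k := b0)"
    define b' where "b' = b(k := - a0)"
    have e1: "Wf k a' b' = Wf k a b" by (rule Wf_cong) (auto simp: a'_def b'_def)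
    have e2: "(\<Prod>l<k. a' l) = (\<Prod>l<k. a l)" by (rule prod.cong) (auto simp: a'_def)
    have e3: "?P j a' b' = ?P j a b" for j by (rule prod.cong) (auto simp: a'_def b'_def)
    have "- a0 * (\<Prod>l<k. a l) + b0 * Wf k a b + c * (\<Prod>l<k. a l) * b0
        = (\<Sum>j\<in>J. \<gamma> j * ?P j a b * (\<alpha> j k * b0 - \<beta> j k * a0))"
      using H[where a=a' and b=b'] e1 e2 e3 by (simp add: a'_def b'_def)
    moreover have "b0 * (\<Sum>j\<in>J. \<gamma>' j * ?P j a b) = (\<Sum>j\<in>J. \<gamma> j * ?P j a b * (\<alpha> j k * b0 - \<beta> j k * a0))"
      unfolding sum_distrib_left by (rule sum.cong) (use b0nz in \<open>simp_all add: \<gamma>'_def\<close>)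
    moreover have "b0 * (Wf k a b + (c - a0 / b0) * (\<Prod>l<k. a l)) = - a0 * (\<Prod>l<k. a l) + b0 * Wf k a b + c * (\<Prod>l<k. a l) * b0"
      using b0nz by (simp add: field_simps)
    ultimately have "b0 * (Wf k a b + (c - a0 / b0) * (\<Prod>l<k. a l))
        = b0 * (\<Sum>j\<in>J. \<gamma>' j * ?P j a b)" by simp
    then have "Wf k a b + (c - a0 / b0) * (\<Prod>l<k. a l) = (\<Sum>j\<in>J. \<gamma>' j * ?P j a b)"
      using b0nz by simp
    also have "\<dots> = \<gamma>' j0 * ?P j0 a b + (\<Sum>j\<in>J - {j0}. \<gamma>' j * ?P j a b)"
      using j0(1) Suc.prems(1) by (simp add: sum.remove)
    also have "\<gamma>' j0 = 0" by (simp add: \<gamma>'_def a0_def b0_def)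
    finally show "Wf k a b + (c - a0 / b0) * (\<Prod>l<k. a l) = (\<Sum>j\<in>J - {j0}. \<gamma>' j * ?P j a b)"
      by simp
  qed
  then have "k \<le> card (J - {j0})"
    using Suc.IH[of "J - {j0}" "c - a0 / b0" \<gamma>'] Suc.prems(1) by simp
  then show ?case using j0(1) Suc.prems(1) card_Diff1_less[of J j0] by simp
qed



lemma prod_if_split:
  fixes A B :: "nat \<Rightarrow> complex"
  assumes "i < k"
  shows "(\<Prod>l<k. if l = i then B l else A l) = B i * (\<Prod>l<k. if l = i then 1 else A l)"
proof -
  have "(\<Prod>l<k. if l = i then B l else A l) = (\<Prod>l<k. (if l = i then B l else 1) * (if l = i then 1 else A l))"
    by (rule prod.cong) auto
  also have "\<dots> = (\<Prod>l<k. if l = i then B l else 1) * (\<Prod>l<k. if l = i then 1 else A l)"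
    by (rule prod.distrib)
  also have "(\<Prod>l<k. if l = i then B l else 1) = B i" using assms by (simp add: prod.delta)
  finally show ?thesis .
qed

lemma W_as_Wf:
  "(\<Sum>i<k. \<Prod>l<k. if l = i then B l else A l) = Wf k A B"
  unfolding Wf_def by (rule sum.cong[OF refl]) (rule prod_if_split, simp)

lemma T_eval:
  "(\<Sum>i<k. rank_one k (\<lambda>l. if l = i then w l else v l) idx) = Wf k (\<lambda>l. v l (idx l)) (\<lambda>l. w l (idx l))"
proof -
  have "(\<Sum>i<k. rank_one k (\<lambda>l. if l = i then w l else v l) idx)
      = (\<Sum>i<k. \<Prod>l<k. if l = i then w l (idx l) else v l (idx l))"
    unfolding rank_one_def by (intro sum.cong prod.cong) auto
  then show ?thesis by (simp add: W_as_Wf)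
qed

lemma indep_minor:
  assumes "lin_indep2 m x y"
  shows "\<exists>j1<m. \<exists>j2<m. x j1 * y j2 - x j2 * y j1 \<noteq> 0"
proof -
  have "\<exists>j1<m. x j1 \<noteq> 0"
  proof (rule ccontr)
    assume "\<not> ?thesis"
    then have h: "\<forall>j<m. 1 * x j + 0 * y j = 0" by auto
    have "(1::complex) = 0 \<and> (0::complex) = 0"
      by (rule assms[unfolded lin_indep2_def, THEN spec, THEN spec, THEN mp, OF h])
    then show False by simp
  qed
  then obtain j1 where j1: "j1 < m" "x j1 \<noteq> 0" by blast
  have "\<exists>j2<m. x j1 * y j2 - x j2 * y j1 \<noteq> 0"
  proof (rule ccontr)
    assume "\<not> ?thesis"
    then have "\<forall>j<m. y j1 * x j + (- x j1) * y j = 0"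
      by (auto simp: algebra_simps)
    then have "y j1 = 0 \<and> - x j1 = 0"
      by (rule assms[unfolded lin_indep2_def, THEN spec, THEN spec, THEN mp])
    then show False using j1 by simp
  qed
  then show ?thesis using j1 by blast
qed

lemma contract_rank_one:
  fixes \<phi> u :: "nat \<Rightarrow> nat \<Rightarrow> complex" and S :: "nat \<Rightarrow> nat set"
  assumes "\<And>i. finite (S i)"
  shows "(\<Sum>idx\<in>PiE {..<k} S. rank_one k u idx * (\<Prod>i<k. \<phi> i (idx i)))
       = (\<Prod>i<k. \<Sum>j\<in>S i. u i j * \<phi> i j)"
proof -
  have "(\<Prod>i<k. \<Sum>j\<in>S i. u i j * \<phi> i j) = (\<Sum>idx\<in>PiE {..<k} S. \<Prod>i<k. u i (idx i) * \<phi> i (idx i))"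
    using assms by (intro prod_sum_PiE) auto
  also have "\<dots> = (\<Sum>idx\<in>PiE {..<k} S. rank_one k u idx * (\<Prod>i<k. \<phi> i (idx i)))"
    unfolding rank_one_def by (simp add: prod.distrib)
  finally show ?thesis by simp
qed

lemma tensor_lower:
  fixes v w :: "nat \<Rightarrow> nat \<Rightarrow> complex" and us :: "nat \<Rightarrow> nat \<Rightarrow> nat \<Rightarrow> complex"
  assumes indep: "\<forall>i<k. lin_indep2 (n i) (v i) (w i)"
    and fin: "finite J"
    and dec: "\<forall>idx. valid_idx k n idx \<longrightarrow>
        (\<Sum>i<k. rank_one k (\<lambda>l. if l = i then w l else v l) idx) = (\<Sum>j\<in>J. \<gamma> j * rank_one k (us j) idx)"
  shows "k \<le> card J"
proof -
  have "\<forall>i. \<exists>j1 j2. i < k \<longrightarrow> j1 < n i \<and> j2 < n i \<and> v i j1 * w i j2 - v i j2 * w i j1 \<noteq> 0"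
    using indep indep_minor by blast
  then obtain j1 j2 where jj: "\<And>i. i < k \<Longrightarrow> j1 i < n i \<and> j2 i < n i \<and> v i (j1 i) * w i (j2 i) - v i (j2 i) * w i (j1 i) \<noteq> 0"
    by metis
  define D where "D i = v i (j1 i) * w i (j2 i) - v i (j2 i) * w i (j1 i)" for i
  have Dnz: "i < k \<Longrightarrow> D i \<noteq> 0" for i using jj by (simp add: D_def)
  have neq: "i < k \<Longrightarrow> j1 i \<noteq> j2 i" for i using Dnz[of i] by (auto simp: D_def)
  define f where "f i u = (w i (j2 i) * u (j1 i) - w i (j1 i) * u (j2 i)) / D i" for i and u :: "nat \<Rightarrow> complex"
  define g where "g i u = (v i (j1 i) * u (j2 i) - v i (j2 i) * u (j1 i)) / D i" for i and u :: "nat \<Rightarrow> complex"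
  define S where "S i = {j1 i, j2 i}" for i
  have "\<forall>a b. Wf k a b + 0 * (\<Prod>l<k. a l) = (\<Sum>j\<in>J. \<gamma> j * (\<Prod>i<k. f i (us j i) * a i + g i (us j i) * b i))"
  proof (intro allI)
    fix a b :: "nat \<Rightarrow> complex"
    define \<phi> where "\<phi> i j = (if j = j1 i then (a i * w i (j2 i) - b i * v i (j2 i)) / D i
                              else (b i * v i (j1 i) - a i * w i (j1 i)) / D i)" for i j
    have fS: "finite (S i)" for i by (simp add: S_def)
    have psi: "(\<Sum>j\<in>S i. u j * \<phi> i j) = f i u * a i + g i u * b i" if "i < k" for i u
    proof -
      have "(\<Sum>j\<in>S i. u j * \<phi> i j) = u (j1 i) * \<phi> i (j1 i) + u (j2 i) * \<phi> i (j2 i)"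
        using neq[OF that] by (simp add: S_def)
      also have "\<dots> = f i u * a i + g i u * b i"
        using neq[OF that] Dnz[OF that] by (simp add: \<phi>_def f_def g_def field_simps)
      finally show ?thesis .
    qed
    have fv: "f i (v i) = 1" "g i (v i) = 0" "f i (w i) = 0" "g i (w i) = 1" if "i < k" for i
      using Dnz[OF that] by (simp_all add: f_def g_def D_def field_simps)
    let ?L = "\<lambda>X. (\<Sum>idx\<in>PiE {..<k} S. X idx * (\<Prod>i<k. \<phi> i (idx i)))"
    have CR: "?L (rank_one k u) = (\<Prod>i<k. \<Sum>j\<in>S i. u i j * \<phi> i j)" for u
      by (rule contract_rank_one) (simp add: S_def)
    have valid: "idx \<in> PiE {..<k} S \<Longrightarrow> valid_idx k n idx" for idx
      unfolding valid_idx_def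
    proof (intro allI impI)
      fix i assume "idx \<in> PiE {..<k} S" "i < k"
      then have "idx i = j1 i \<or> idx i = j2 i" by (auto simp: S_def PiE_iff)
      then show "idx i < n i" using jj[OF \<open>i < k\<close>] by auto
    qed
    have "?L (\<lambda>idx. \<Sum>i<k. rank_one k (\<lambda>l. if l = i then w l else v l) idx)
        = ?L (\<lambda>idx. \<Sum>j\<in>J. \<gamma> j * rank_one k (us j) idx)"
      by (rule sum.cong) (use dec valid in auto)
    moreover have "?L (\<lambda>idx. \<Sum>i<k. rank_one k (\<lambda>l. if l = i then w l else v l) idx)
        = (\<Sum>i<k. ?L (rank_one k (\<lambda>l. if l = i then w l else v l)))"
      by (simp add: sum_distrib_right sum.swap[of _ "PiE {..<k} S"])
    moreover have "\<dots> = (\<Sum>i<k. \<Prod>l<k. if l = i then b l else a l)"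
    proof (rule sum.cong[OF refl])
      fix i
      show "?L (rank_one k (\<lambda>l. if l = i then w l else v l)) = (\<Prod>l<k. if l = i then b l else a l)"
        unfolding CR
        by (rule prod.cong) (auto simp: psi fv)
    qed
    moreover have "?L (\<lambda>idx. \<Sum>j\<in>J. \<gamma> j * rank_one k (us j) idx)
        = (\<Sum>j\<in>J. \<gamma> j * ?L (rank_one k (us j)))"
      by (simp add: sum_distrib_right sum_distrib_left sum.swap[of _ "PiE {..<k} S"] mult.assoc)
    moreover have "\<dots> = (\<Sum>j\<in>J. \<gamma> j * (\<Prod>i<k. f i (us j i) * a i + g i (us j i) * b i))"
      unfolding CR
      by (intro sum.cong refl arg_cong2[where f="(*)"] prod.cong) (auto simp: psi)
    ultimately show "Wf k a b + 0 * (\<Prod>l<k. a l) = (\<Sum>j\<in>J. \<gamma> j * (\<Prod>i<k. f i (us j i) * a i + g i (us j i) * b i))"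
      by (simp add: W_as_Wf)
  qed
  then show ?thesis by (rule lower[OF fin])
qed



theorem proposition4p6:
  fixes k :: nat and n :: "nat \<Rightarrow> nat"
    and v w p :: "nat \<Rightarrow> nat \<Rightarrow> complex"
  assumes "k \<ge> 3"
    and indep: "\<forall>i<k. lin_indep2 (n i) (v i) (w i)"
    and pspan: "\<forall>i<k. in_span2 (n i) (v i) (w i) (p i)"
    and pnz: "\<forall>i<k. \<exists>j<n i. p i j \<noteq> 0"
    and pnv: "\<forall>i<k. \<not> (\<exists>c. \<forall>j<n i. p i j = c * v i j)"
  shows "in_decomposition_locus k n
           (\<lambda>idx. \<Sum>i<k. rank_one k (\<lambda>l. if l = i then w l else v l) idx)
           (rank_one k p)"
proof -
  note k3 = assms(1)
  define T where "T = (\<lambda>idx. \<Sum>i<k. rank_one k (\<lambda>l. if l = i then w l else v l) idx)"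
  have "\<forall>i. \<exists>a b. i < k \<longrightarrow> (\<forall>j<n i. p i j = a * v i j + b * w i j)"
    using pspan unfolding in_span2_def by blast
  then obtain ca cb where cab: "\<And>i j. i < k \<Longrightarrow> j < n i \<Longrightarrow> p i j = ca i * v i j + cb i * w i j"
    by metis
  have cbnz: "cb i \<noteq> 0" if "i < k" for i
  proof
    assume "cb i = 0"
    then have "\<forall>j<n i. p i j = ca i * v i j" using cab[OF that] by simp
    then show False using pnv that by blast
  qed
  define e where "e i = ca i / cb i" for i
  obtain c \<gamma> \<alpha> \<beta> where up: "\<And>V W. Wf k V W - c * (\<Prod>i<k. W i + e i * V i)
      = (\<Sum>j<k-1. \<gamma> j * (\<Prod>i<k. \<alpha> j i * V i + \<beta> j i * W i))"
    using upper[OF k3, of e] by blast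
  define Bp where "Bp = (\<Prod>i<k. cb i)"
  have Bpnz: "Bp \<noteq> 0" unfolding Bp_def using cbnz by (simp add: prod_zero_iff)
  define c' where "c' = c / Bp"
  define us where "us j i m = (if i = 0 then \<gamma> j else 1) * (\<alpha> j i * v i m + \<beta> j i * w i m)" for j i m
  have dec: "\<forall>idx. valid_idx k n idx \<longrightarrow> T idx - c' * rank_one k p idx = (\<Sum>j<k-1. rank_one k (us j) idx)"
  proof (intro allI impI)
    fix idx assume vi: "valid_idx k n idx"
    define V where "V l = v l (idx l)" for l
    define W where "W l = w l (idx l)" for l
    have TV: "T idx = Wf k V W" unfolding T_def V_def W_def by (rule T_eval)
    have "rank_one k p idx = (\<Prod>i<k. cb i * (W i + e i * V i))"
      unfolding rank_one_def
    proof (rule prod.cong[OF refl])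
      fix i assume "i \<in> {..<k}"
      then have ik: "i < k" by simp
      have "p i (idx i) = ca i * V i + cb i * W i"
        using cab[OF ik] vi ik by (simp add: valid_idx_def V_def W_def)
      then show "p i (idx i) = cb i * (W i + e i * V i)" using cbnz[OF ik] by (simp add: e_def field_simps)
    qed
    then have P: "rank_one k p idx = Bp * (\<Prod>i<k. W i + e i * V i)"
      by (simp add: prod.distrib Bp_def)
    have R: "rank_one k (us j) idx = \<gamma> j * (\<Prod>i<k. \<alpha> j i * V i + \<beta> j i * W i)" for j
    proof -
      have "rank_one k (us j) idx = (\<Prod>i<k. (if i = 0 then \<gamma> j else 1) * (\<alpha> j i * V i + \<beta> j i * W i))"
        unfolding rank_one_def us_def V_def W_def by simp
      also have "\<dots> = (\<Prod>i<k. if i = 0 then \<gamma> j else 1) * (\<Prod>i<k. \<alpha> j i * V i + \<beta> j i * W i)"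
        by (rule prod.distrib)
      also have "(\<Prod>i<k. if i = 0 then \<gamma> j else 1) = \<gamma> j" using k3 by (simp add: prod.delta)
      finally show ?thesis .
    qed
    show "T idx - c' * rank_one k p idx = (\<Sum>j<k-1. rank_one k (us j) idx)"
      unfolding TV P R c'_def using Bpnz up[of V W] by simp
  qed
  let ?TP = "\<lambda>idx. T idx - c' * rank_one k p idx"
  have ub1: "trank k n ?TP \<le> k - 1"
    unfolding trank_def by (rule Least_le) (use dec in blast)
  have exT: "\<exists>us. \<forall>idx. valid_idx k n idx \<longrightarrow> T idx = (\<Sum>j<k. rank_one k (us j) idx)"
    by (rule exI[of _ "\<lambda>j l. if l = j then w l else v l"]) (simp add: T_def)
  have ubT: "trank k n T \<le> k"
    unfolding trank_def by (rule Least_le) (rule exT)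
  have lbT: "k \<le> trank k n T"
  proof -
    obtain us0 where us0: "\<forall>idx. valid_idx k n idx \<longrightarrow> T idx = (\<Sum>j<trank k n T. rank_one k (us0 j) idx)"
      using LeastI_ex[of "\<lambda>r. \<exists>us. \<forall>idx. valid_idx k n idx \<longrightarrow> T idx = (\<Sum>j<r. rank_one k (us j) idx)"] exT
      unfolding trank_def by blast
    have "k \<le> card {..<trank k n T}"
      by (rule tensor_lower[OF indep, of "{..<trank k n T}" "\<lambda>_. 1" us0]) (use us0 in \<open>unfold T_def, auto\<close>)
    then show ?thesis by simp
  qed
  have lb1: "k - 1 \<le> trank k n ?TP"
  proof -
    define r where "r = trank k n ?TP"
    obtain us1 where us1: "\<forall>idx. valid_idx k n idx \<longrightarrow> ?TP idx = (\<Sum>j<r. rank_one k (us1 j) idx)"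
      using LeastI_ex[of "\<lambda>r. \<exists>us. \<forall>idx. valid_idx k n idx \<longrightarrow> ?TP idx = (\<Sum>j<r. rank_one k (us j) idx)"] dec
      unfolding trank_def r_def by blast
    define us' where "us' = us1(r := p)"
    define g where "g j = (if j = r then c' else 1)" for j
    have "k \<le> card {..<Suc r}"
    proof (rule tensor_lower[OF indep, of "{..<Suc r}" g us'])
      show "\<forall>idx. valid_idx k n idx \<longrightarrow>
        (\<Sum>i<k. rank_one k (\<lambda>l. if l = i then w l else v l) idx) = (\<Sum>j\<in>{..<Suc r}. g j * rank_one k (us' j) idx)"
      proof (intro allI impI)
        fix idx assume "valid_idx k n idx"
        then have "T idx = (\<Sum>j<r. rank_one k (us1 j) idx) + c' * rank_one k p idx"
          using us1 by (metis diff_add_cancel add.commute)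
        also have "(\<Sum>j<r. rank_one k (us1 j) idx) = (\<Sum>j<r. g j * rank_one k (us' j) idx)"
          by (rule sum.cong) (auto simp: g_def us'_def)
        finally show "(\<Sum>i<k. rank_one k (\<lambda>l. if l = i then w l else v l) idx) = (\<Sum>j\<in>{..<Suc r}. g j * rank_one k (us' j) idx)"
          by (simp add: T_def g_def us'_def)
      qed
    qed simp
    then show ?thesis by (simp add: r_def)
  qed
  have "trank k n ?TP = trank k n T - 1" using ub1 lb1 ubT lbT by simp
  then show ?thesis unfolding in_decomposition_locus_def T_def by blast
qed


end
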